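(* Let $\Sigma_{\tau_d}=(\mathbb{R}^n,P,\mathcal P,F)$ be a switched system with $\mathcal P=\mathcal S_{\tau_d}(\mathbb{R}^+_0,P)$, let $\tau_s,\eta,\varepsilon>0$ with $\tau_d=N\tau_s$ for a positive integer $N$. Assume that for every $p\in P$ there is a $\delta$-GAS Lyapunov function $V_p$ for $\Sigma_p$, that there exists $\mu\ge1$ with $V_p(x,y)\le\mu V_{p'}(x,y)$ for all $x,y\in\mathbb{R}^n$ and $p,p'\in P$, and that for every $p$ there is a $\mathcal K_\infty$ function $\gamma_p$ with $|V_p(x,y)-V_p(x,z)|\le\gamma_p(\|y-z\|)$ for all $x,y,z\in\mathbb{R}^n$; let $\gamma=\max_p\gamma_p$. If $\tau_d>\frac{\log\mu}{\kappa}$ and $$\eta\le\min\Big\{\gamma^{-1}\Big(\frac{\frac1\mu-e^{-\kappa\tau_d}}{1-e^{-\kappa\tau_d}}(1-e^{-\kappa\tau_s})\underline\alpha(\varepsilon)\Big),\ \overline\alpha^{-1}\big(\underline\alpha(\varepsilon)\big)\Big\},$$ then $T_{\tau_s}(\Sigma_{\tau_d})\sim_\varepsilon T_{\tau_s,\eta}(\Sigma_{\tau_d})$.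
   Context: A switched system is $\Sigma=(\mathbb{R}^n,P,\mathcal P,F)$ where $P=\{1,\dots,m\}$; $\mathcal S(\mathbb{R}^+_0,P)$ is the set of piecewise constant, right-continuous functions $\mathbb{R}^+_0\to P$ with finitely many discontinuities (switching times) on every bounded interval; $\mathcal S_{\tau_d}(\mathbb{R}^+_0,P)$ is the subset of signals whose switching times $t_1<t_2<\cdots$ satisfy $t_1\ge\tau_d$ and $t_i-t_{i-1}\ge\tau_d$ for $i\ge2$. $F=\{f_1,\dots,f_m\}$ with each $f_p$ locally Lipschitz and all solutions of $\dot x=f_p(x)$ defined for all $t\ge0$. Subsystem $\Sigma_p$: $\dot x=f_p(x)$; $\mathbf x(t,x,p)$ is its solution at time $t$ from $x$. A smooth $V_p:\mathbb{R}^n\times\mathbb{R}^n\to\mathbb{R}^+_0$ is a $\delta$-GAS Lyapunov function for $\Sigma_p$ if there exist $\mathcal K_\infty$ functions $\underline\alpha_p,\overline\alpha_p$ and $\kappa_p>0$ with $\underline\alpha_p(\|x-y\|)\le V_p(x,y)\le\overline\alpha_p(\|x-y\|)$ and $\frac{\partial V_p}{\partial x}(x,y)f_p(x)+\frac{\partial V_p}{\partial y}(x,y)f_p(y)\le-\kappa_p V_p(x,y)$ for all $x,y$ ($\mathcal K_\infty$: continuous, strictly increasing, unbounded, zero at zero). Set $\underline\alpha=\min_p\underline\alpha_p$, $\overline\alpha=\max_p\overline\alpha_p$, $\kappa=\min_p\kappa_p$. A transition system is $T=(Q,L,\to,O,H,I)$: states, labels, transition relation $\to\subseteq Q\times L\times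 Q$ (written $q\xrightarrow{l}q'$), outputs, output map $H:Q\to O$, initial states $I\subseteq Q$; metric if $O$ has a metric $d$. For metric $T_1,T_2$ with common $L,O$ and $\varepsilon\ge0$, $R\subseteq Q_1\times Q_2$ is an $\varepsilon$-approximate bisimulation relation if for all $(q_1,q_2)\in R$: $d(H_1(q_1),H_2(q_2))\le\varepsilon$; every $q_1\xrightarrow{l}_1q_1'$ is matched by some $q_2\xrightarrow{l}_2q_2'$ with $(q_1',q_2')\in R$; and symmetrically. $T_1\sim_\varepsilon T_2$ if such $R$ exists with every initial state of $T_1$ related to some initial state of $T_2$ and vice versa. $T_{\tau_s}(\Sigma_{\tau_d})$: states $\mathbb{R}^n\times P\times\{0,\dots,N-1\}$; labels $P$; $(x,p,i)\xrightarrow{l}(x',p',i')$ iff $l=p$, $x'=\mathbf x(\tau_s,x,p)$ and one of: (a) $i<N-1$, $p'=p$, $i'=i+1$; (b) $i=N-1$, $p'=p$, $i'=N-1$; (c) $i=N-1$, $p'\neq p$, $i'=0$. Outputs $\mathbb{R}^n$, $H((x,p,i))=x$, initial states $\mathbb{R}^n\times P\times\{0\}$. Lattice $[\mathbb{R}^n]_\eta=\{q\in\mathbb{R}^n: q_i=k_i\frac{2\eta}{\sqrt n},\ k_i\in\mathbb Z\}$. $T_{\tau_s,\eta}(\Sigma_{\tau_d})$: states $[\mathbb{R}^n]_\eta\times P\times\{0,\dots,N-1\}$; labels $P$; $(q,p,i)\xrightarrow{l}(q',p',i')$ iff $l=p$, $\|\mathbf x(\tau_s,q,p)-q'\|\le\eta$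 and one of (a),(b),(c) above holds; outputs $\mathbb{R}^n$, $H((q,p,i))=q$; initial states $[\mathbb{R}^n]_\eta\times P\times\{0\}$. Both use the Euclidean metric on $\mathbb{R}^n$. *)

theory Defs
  imports "HOL-Analysis.Analysis"
begin

definition Kinf :: "(real \<Rightarrow> real) \<Rightarrow> bool" where
  "Kinf a \<longleftrightarrow> continuous_on {0..} a \<and> strict_mono_on {0..} a \<and> a 0 = 0 \<and>
     filterlim a at_top at_top"

definition Kinf_inv :: "(real \<Rightarrow> real) \<Rightarrow> real \<Rightarrow> real" where
  "Kinf_inv a r = (THE s. 0 \<le> s \<and> a s = r)"

fun iter_dderiv :: "'a::real_normed_vector list \<Rightarrow> ('a \<Rightarrow> real) \<Rightarrow> 'a \<Rightarrow> real" where
  "iter_dderiv [] g = g"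
| "iter_dderiv (v # vs) g = (\<lambda>x. frechet_derivative (iter_dderiv vs g) (at x) v)"

text \<open>g is smooth iff every iterated directional derivative exists and is
  differentiable everywhere (hence all derivatives of all orders exist and are continuous).\<close>
definition smooth :: "('a::real_normed_vector \<Rightarrow> real) \<Rightarrow> bool" where
  "smooth g \<longleftrightarrow> (\<forall>vs x. iter_dderiv vs g differentiable (at x))"

definition is_flow :: "('a::real_normed_vector \<Rightarrow> 'a) \<Rightarrow> (real \<Rightarrow> 'a \<Rightarrow> 'a) \<Rightarrow> bool" where
  "is_flow f phi \<longleftrightarrow> (\<forall>x. phi 0 x = x \<and>
     (\<forall>t\<ge>0. ((\<lambda>s. phi s x) has_vector_derivative f (phi t x)) (at t within {0..})))"

definition deltaGAS_Lyapunov ::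
  "('a::euclidean_space \<Rightarrow> 'a) \<Rightarrow> ('a \<Rightarrow> 'a \<Rightarrow> real) \<Rightarrow> (real \<Rightarrow> real) \<Rightarrow> (real \<Rightarrow> real) \<Rightarrow> real \<Rightarrow> bool" where
  "deltaGAS_Lyapunov f V al au k \<longleftrightarrow>
     smooth (\<lambda>(x, y). V x y) \<and> (\<forall>x y. 0 \<le> V x y) \<and>
     Kinf al \<and> Kinf au \<and> k > 0 \<and>
     (\<forall>x y. al (norm (x - y)) \<le> V x y \<and> V x y \<le> au (norm (x - y))) \<and>
     (\<forall>x y. frechet_derivative (\<lambda>(x, y). V x y) (at (x, y)) (f x, f y) \<le> - k * V x y)"

record ('q, 'l, 'o) tsys =
  states :: "'q set"
  labels :: "'l set"
  trans :: "('q \<times> 'l \<times> 'q) set"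
  outs :: "'o set"
  outmap :: "'q \<Rightarrow> 'o"
  inits :: "'q set"

definition approx_bisim_rel ::
  "('q1, 'l, 'o::metric_space) tsys \<Rightarrow> ('q2, 'l, 'o) tsys \<Rightarrow> real \<Rightarrow> ('q1 \<times> 'q2) set \<Rightarrow> bool" where
  "approx_bisim_rel T1 T2 e R \<longleftrightarrow> R \<subseteq> states T1 \<times> states T2 \<and>
     (\<forall>(q1, q2) \<in> R.
        dist (outmap T1 q1) (outmap T2 q2) \<le> e \<and>
        (\<forall>l q1'. (q1, l, q1') \<in> trans T1 \<longrightarrow> (\<exists>q2'. (q2, l, q2') \<in> trans T2 \<and> (q1', q2') \<in> R)) \<and>
        (\<forall>l q2'. (q2, l, q2') \<in> trans T2 \<longrightarrow> (\<exists>q1'. (q1, l, q1') \<in> trans T1 \<and> (q1', q2') \<in> R)))"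

definition approx_bisimilar ::
  "('q1, 'l, 'o::metric_space) tsys \<Rightarrow> real \<Rightarrow> ('q2, 'l, 'o) tsys \<Rightarrow> bool" where
  "approx_bisimilar T1 e T2 \<longleftrightarrow> (\<exists>R. approx_bisim_rel T1 T2 e R \<and>
      (\<forall>q1 \<in> inits T1. \<exists>q2 \<in> inits T2. (q1, q2) \<in> R) \<and>
      (\<forall>q2 \<in> inits T2. \<exists>q1 \<in> inits T1. (q1, q2) \<in> R))"

text \<open>Modes \<open>P = {1..m}\<close>; \<open>phi p\<close> is the flow of subsystem p; states (x, p, i).\<close>
definition mode_step :: "nat set \<Rightarrow> nat \<Rightarrow> nat \<Rightarrow> nat \<Rightarrow> nat \<Rightarrow> nat \<Rightarrow> bool" where
  "mode_step P N p i p' i' \<longleftrightarrow>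
     (i < N - 1 \<and> p' = p \<and> i' = i + 1) \<or>
     (i = N - 1 \<and> p' = p \<and> i' = N - 1) \<or>
     (i = N - 1 \<and> p' \<in> P \<and> p' \<noteq> p \<and> i' = 0)"

definition T_sys ::
  "nat \<Rightarrow> nat \<Rightarrow> (nat \<Rightarrow> real \<Rightarrow> real^'n \<Rightarrow> real^'n) \<Rightarrow> real \<Rightarrow>
   ((real^'n) \<times> nat \<times> nat, nat, real^'n) tsys" where
  "T_sys m N phi ts =
     \<lparr> states = UNIV \<times> {1..m} \<times> {0..<N},
       labels = {1..m},
       trans = {((x, p, i), l, (x', p', i')) | x p i l x' p' i'.
                  (x, p, i) \<in> UNIV \<times> {1..m} \<times> {0..<N} \<and> l = p \<and> x' = phi p ts x \<and>
                  mode_step {1..m} N p i p' i'},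
       outs = UNIV,
       outmap = (\<lambda>(x, p, i). x),
       inits = UNIV \<times> {1..m} \<times> {0} \<rparr>"

definition lattice :: "real \<Rightarrow> (real^'n) set" where
  "lattice eta = {q. \<forall>i. \<exists>k::int. q $ i = of_int k * (2 * eta / sqrt (real CARD('n)))}"

definition T_abs ::
  "nat \<Rightarrow> nat \<Rightarrow> (nat \<Rightarrow> real \<Rightarrow> real^'n \<Rightarrow> real^'n) \<Rightarrow> real \<Rightarrow> real \<Rightarrow>
   ((real^'n) \<times> nat \<times> nat, nat, real^'n) tsys" where
  "T_abs m N phi ts eta =
     \<lparr> states = lattice eta \<times> {1..m} \<times> {0..<N},
       labels = {1..m},
       trans = {((q, p, i), l, (q', p', i')) | q p i l q' p' i'.
                  (q, p, i) \<in> lattice eta \<times> {1..m} \<times> {0..<N} \<and> q' \<in> lattice eta \<and>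
                  l = p \<and> norm (phi p ts q - q') \<le> eta \<and>
                  mode_step {1..m} N p i p' i'},
       outs = UNIV,
       outmap = (\<lambda>(q, p, i). q),
       inits = lattice eta \<times> {1..m} \<times> {0} \<rparr>"

end

theory Submission
  imports Defs
begin

lemma lyap_decay:
  fixes f :: "'a::euclidean_space \<Rightarrow> 'a"
  assumes L: "deltaGAS_Lyapunov f V al au k" and F: "is_flow f phi" and t: "t \<ge> 0"
  shows "V (phi t x) (phi t y) \<le> exp (- k * t) * V x y"
proof -
  define g where "g = (\<lambda>(x, y). V x y)"
  define W where "W = (\<lambda>s. V (phi s x) (phi s y))"
  have sm: "smooth g" and kpos: "k > 0"
    and dec: "\<And>x y. frechet_derivative g (at (x, y)) (f x, f y) \<le> - k * V x y"
    using L unfolding deltaGAS_Lyapunov_def g_def by auto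
  have gd: "\<And>z. (g has_derivative frechet_derivative g (at z)) (at z)"
  proof -
    fix z
    have "iter_dderiv [] g differentiable (at z)" using sm unfolding smooth_def by blast
    then show "(g has_derivative frechet_derivative g (at z)) (at z)"
      by (simp add: frechet_derivative_works)
  qed
  have Wd: "(W has_real_derivative frechet_derivative g (at (phi s x, phi s y)) (f (phi s x), f (phi s y))) (at s within {0..})"
    if s: "s \<ge> 0" for s
  proof -
    have px: "((\<lambda>s. phi s x) has_vector_derivative f (phi s x)) (at s within {0..})"
      and py: "((\<lambda>s. phi s y) has_vector_derivative f (phi s y)) (at s within {0..})"
      using F s unfolding is_flow_def by auto
    have pp: "((\<lambda>s. (phi s x, phi s y)) has_derivative (\<lambda>h. h *\<^sub>R (f (phi s x), f (phi s y)))) (at s within {0..})"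
      using has_derivative_Pair[OF px[unfolded has_vector_derivative_def] py[unfolded has_vector_derivative_def]]
      by simp
    have c: "((\<lambda>s. g (phi s x, phi s y)) has_derivative (\<lambda>h. frechet_derivative g (at (phi s x, phi s y)) (h *\<^sub>R (f (phi s x), f (phi s y))))) (at s within {0..})"
      by (rule has_derivative_compose[OF pp gd])
    have lin: "linear (frechet_derivative g (at (phi s x, phi s y)))"
      using gd has_derivative_linear by blast
    have e: "\<And>h v. frechet_derivative g (at (phi s x, phi s y)) (h *\<^sub>R v) = h * frechet_derivative g (at (phi s x, phi s y)) v"
      using linear_cmul[OF lin] by simp
    note c = c[unfolded e]
    with c show ?thesis unfolding has_field_derivative_def W_def g_def
      by (simp add: mult.commute[of _ "frechet_derivative _ _ _"])
  qed
  define U where "U = (\<lambda>s. exp (k * s) * W s)"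
  have Ud: "(U has_real_derivative exp (k * s) * (k * W s + frechet_derivative g (at (phi s x, phi s y)) (f (phi s x), f (phi s y)))) (at s within {0..})"
    if s: "s \<ge> 0" for s
    unfolding U_def
    by (rule derivative_eq_intros Wd[OF s] refl | simp add: algebra_simps)+
  have "U t \<le> U 0"
  proof (rule DERIV_nonpos_imp_decreasing_open[OF t])
    fix s assume s: "0 < s" "s < t"
    have "at s within {0..} = at s"
      by (rule at_within_interior) (use s in auto)
    then have "(U has_real_derivative exp (k * s) * (k * W s + frechet_derivative g (at (phi s x, phi s y)) (f (phi s x), f (phi s y)))) (at s)"
      using Ud[of s] s by simp
    moreover have "exp (k * s) * (k * W s + frechet_derivative g (at (phi s x, phi s y)) (f (phi s x), f (phi s y))) \<le> 0"
      using dec[of "phi s x" "phi s y"] unfolding W_def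
      by (intro mult_nonneg_nonpos) auto
    ultimately show "\<exists>y. (U has_real_derivative y) (at s) \<and> y \<le> 0" by blast
  next
    show "continuous_on {0..t} U"
      unfolding continuous_on_eq_continuous_within
    proof
      fix s assume "s \<in> {0..t}"
      then have "continuous (at s within {0..}) U"
        using Ud[of s] by (auto intro: DERIV_continuous)
      then show "continuous (at s within {0..t}) U"
        by (rule continuous_within_subset) auto
    qed
  qed
  moreover have "U 0 = V x y" using F unfolding U_def W_def is_flow_def by simp
  ultimately have "exp (k * t) * W t \<le> V x y" unfolding U_def by simp
  then have "W t \<le> exp (- k * t) * V x y"
    by (simp add: exp_minus field_simps mult.commute)
  then show ?thesis unfolding W_def .
qed

lemma Kinf_max2:
  assumes "Kinf a" "Kinf b" shows "Kinf (\<lambda>r. max (a r) (b r))"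
proof -
  have "continuous_on {0..} (\<lambda>r. max (a r) (b r))"
    using assms unfolding Kinf_def by (auto intro: continuous_on_max)
  moreover have "strict_mono_on {0..} (\<lambda>r. max (a r) (b r))"
    using assms unfolding Kinf_def strict_mono_on_def by (auto simp: max_def) (smt (verit))+
  moreover have "filterlim (\<lambda>r. max (a r) (b r)) at_top at_top"
    using assms unfolding Kinf_def
    by (rule_tac filterlim_at_top_mono[of a]) auto
  ultimately show ?thesis using assms unfolding Kinf_def by auto
qed

lemma Kinf_Max:
  assumes "finite A" "A \<noteq> {}" "\<forall>p\<in>A. Kinf (g p)"
  shows "Kinf (\<lambda>r. Max ((\<lambda>p. g p r) ` A))"
  using assms
proof (induction A rule: finite_ne_induct)
  case (singleton x) then show ?case by simp
next
  case (insert x F)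
  have "Kinf (\<lambda>r. max (g x r) (Max ((\<lambda>p. g p r) ` F)))"
    using insert by (intro Kinf_max2) auto
  then show ?case using insert by simp
qed

lemma Kinf_mono: "Kinf a \<Longrightarrow> 0 \<le> s \<Longrightarrow> s \<le> t \<Longrightarrow> a s \<le> a t"
  unfolding Kinf_def by (auto intro: strict_mono_on_leD)

lemma Kinf_nonneg: "Kinf a \<Longrightarrow> 0 \<le> s \<Longrightarrow> 0 \<le> a s"
  using Kinf_mono[of a 0 s] unfolding Kinf_def by auto

lemma Kinf_inv:
  assumes K: "Kinf a" and r: "r \<ge> 0"
  shows "0 \<le> Kinf_inv a r \<and> a (Kinf_inv a r) = r"
proof -
  from K have "eventually (\<lambda>s. a s \<ge> r) at_top"
    unfolding Kinf_def by (simp add: filterlim_at_top)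
  then obtain B where B: "\<And>s. s \<ge> B \<Longrightarrow> a s \<ge> r" by (auto simp: eventually_at_top_linorder)
  have "\<exists>s. 0 \<le> s \<and> s \<le> max B 0 \<and> a s = r"
    using K r B[of "max B 0"] unfolding Kinf_def
    by (intro IVT') (auto elim: continuous_on_subset)
  then obtain s where s: "0 \<le> s" "a s = r" by auto
  have "\<exists>!s. 0 \<le> s \<and> a s = r"
  proof (rule ex1I[of _ s])
    fix s' assume "0 \<le> s' \<and> a s' = r"
    then show "s' = s" using s K unfolding Kinf_def by (auto dest: strict_mono_on_eqD)
  qed (use s in auto)
  then show ?thesis unfolding Kinf_inv_def by (rule theI')
qed

lemma lattice_cover:
  fixes x :: "real^'n"
  assumes eta: "eta > 0"
  shows "\<exists>q\<in>lattice eta. norm (x - q) \<le> eta"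
proof -
  define n where "n = real CARD('n)"
  have n: "n > 0" unfolding n_def by simp
  define h where "h = 2 * eta / sqrt n"
  have h: "h > 0" using eta n unfolding h_def by simp
  define q :: "real^'n" where "q = (\<chi> i. of_int (round (x $ i / h)) * h)"
  have "q \<in> lattice eta" unfolding lattice_def q_def h_def n_def by auto
  moreover have "norm (x - q) \<le> eta"
  proof -
    have ci: "\<bar>x $ i - q $ i\<bar> \<le> h / 2" for i
    proof -
      have "\<bar>of_int (round (x $ i / h)) - x $ i / h\<bar> \<le> 1/2" by (rule of_int_round_abs_le)
      then have "\<bar>of_int (round (x $ i / h)) - x $ i / h\<bar> * h \<le> 1/2 * h" using h by (intro mult_right_mono) auto
      moreover have "\<bar>of_int (round (x $ i / h)) - x $ i / h\<bar> * h = \<bar>x $ i - q $ i\<bar>"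
      proof -
        have "\<bar>of_int (round (x $ i / h)) - x $ i / h\<bar> * h = \<bar>(of_int (round (x $ i / h)) - x $ i / h) * h\<bar>"
          using h by (simp add: abs_mult)
        also have "(of_int (round (x $ i / h)) - x $ i / h) * h = q $ i - x $ i"
          using h unfolding q_def by (simp add: algebra_simps)
        finally show ?thesis by (simp add: abs_minus_commute)
      qed
      ultimately show ?thesis by simp
    qed
    have "norm (x - q) \<le> norm ((\<chi> i. h / 2) :: real^'n)"
      by (rule norm_le_componentwise_cart) (use ci h in auto)
    also have "norm ((\<chi> i. h / 2) :: real^'n) = sqrt (n * (h/2)^2)"
      using h unfolding norm_vec_def L2_set_def n_def by simp
    also have "\<dots> = eta"
      using n eta unfolding h_def by (simp add: power_divide real_sqrt_mult)
    finally show ?thesis .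
  qed
  ultimately show ?thesis by blast
qed


lemma T_sys_trans: "((x,p,i),l,(x',p',i')) \<in> trans (T_sys m N phi ts) \<longleftrightarrow>
   p \<in> {1..m} \<and> i < N \<and> l = p \<and> x' = phi p ts x \<and> mode_step {1..m} N p i p' i'"
  by (auto simp: T_sys_def)

lemma T_abs_trans: "((q,p,i),l,(q',p',i')) \<in> trans (T_abs m N phi ts eta) \<longleftrightarrow>
   q \<in> lattice eta \<and> p \<in> {1..m} \<and> i < N \<and> q' \<in> lattice eta \<and> l = p \<and>
   norm (phi p ts q - q') \<le> eta \<and> mode_step {1..m} N p i p' i'"
  by (auto simp: T_abs_def)

theorem theorem6:
  fixes m N :: nat
    and f :: "nat \<Rightarrow> real^'n \<Rightarrow> real^'n"
    and phi :: "nat \<Rightarrow> real \<Rightarrow> real^'n \<Rightarrow> real^'n"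
    and V :: "nat \<Rightarrow> real^'n \<Rightarrow> real^'n \<Rightarrow> real"
    and al au gam :: "nat \<Rightarrow> real \<Rightarrow> real"
    and kap :: "nat \<Rightarrow> real"
    and mu ts eta eps :: real
  defines "alpha_lo \<equiv> (\<lambda>r. Min ((\<lambda>p. al p r) ` {1..m}))"
    and "alpha_up \<equiv> (\<lambda>r. Max ((\<lambda>p. au p r) ` {1..m}))"
    and "kappa \<equiv> Min (kap ` {1..m})"
    and "gamma \<equiv> (\<lambda>r. Max ((\<lambda>p. gam p r) ` {1..m}))"
    and "td \<equiv> real N * ts"
  assumes m: "m \<ge> 1"
    and N: "N \<ge> 1"
    and ts: "ts > 0" and eta: "eta > 0" and eps: "eps > 0"
    and lip: "\<forall>p\<in>{1..m}. local_lipschitz (UNIV::real set) UNIV (\<lambda>_. f p)"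
    and flow: "\<forall>p\<in>{1..m}. is_flow (f p) (phi p)"
    and lyap: "\<forall>p\<in>{1..m}. deltaGAS_Lyapunov (f p) (V p) (al p) (au p) (kap p)"
    and mu: "mu \<ge> 1"
    and mu_bound: "\<forall>p\<in>{1..m}. \<forall>p'\<in>{1..m}. \<forall>x y. V p x y \<le> mu * V p' x y"
    and gam: "\<forall>p\<in>{1..m}. Kinf (gam p) \<and>
                (\<forall>x y z. \<bar>V p x y - V p x z\<bar> \<le> gam p (norm (y - z)))"
    and dwell: "td > ln mu / kappa"
    and eta_bound: "eta \<le> min
        (Kinf_inv gamma (((1 / mu - exp (- kappa * td)) / (1 - exp (- kappa * td)))
                          * (1 - exp (- kappa * ts)) * alpha_lo eps))
        (Kinf_inv alpha_up (alpha_lo eps))"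
  shows "approx_bisimilar (T_sys m N phi ts) eps (T_abs m N phi ts eta)"
proof -
  define P where "P = {1..m::nat}"
  have Pfin: "finite P" and Pne: "P \<noteq> {}" using m unfolding P_def by auto
  have kp: "\<And>p. p \<in> P \<Longrightarrow> kap p > 0" and alK: "\<And>p. p \<in> P \<Longrightarrow> Kinf (al p)"
    and auK: "\<And>p. p \<in> P \<Longrightarrow> Kinf (au p)"
    and Vnn: "\<And>p x y. p \<in> P \<Longrightarrow> 0 \<le> V p x y"
    and Vlo: "\<And>p x y. p \<in> P \<Longrightarrow> al p (norm (x - y)) \<le> V p x y"
    and Vup: "\<And>p x y. p \<in> P \<Longrightarrow> V p x y \<le> au p (norm (x - y))"
    using lyap unfolding P_def deltaGAS_Lyapunov_def by auto
  have gamK: "\<And>p. p \<in> P \<Longrightarrow> Kinf (gam p)"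
    and gamB: "\<And>p x y z. p \<in> P \<Longrightarrow> \<bar>V p x y - V p x z\<bar> \<le> gam p (norm (y - z))"
    using gam unfolding P_def by auto
  have kappa_le: "\<And>p. p \<in> P \<Longrightarrow> kappa \<le> kap p"
    unfolding kappa_def P_def[symmetric] using Pfin by auto
  have kappa_pos: "kappa > 0"
    unfolding kappa_def P_def[symmetric] using Pfin Pne kp by auto
  have gammaK: "Kinf gamma" unfolding gamma_def P_def[symmetric]
    using Pfin Pne gamK by (intro Kinf_Max) auto
  have alpha_upK: "Kinf alpha_up" unfolding alpha_up_def P_def[symmetric]
    using Pfin Pne auK by (intro Kinf_Max) auto
  have gam_le: "\<And>p r. p \<in> P \<Longrightarrow> gam p r \<le> gamma r"
    unfolding gamma_def P_def[symmetric] using Pfin by auto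
  have au_le: "\<And>p r. p \<in> P \<Longrightarrow> au p r \<le> alpha_up r"
    unfolding alpha_up_def P_def[symmetric] using Pfin by auto
  define a where "a = alpha_lo eps"
  have a_le: "\<And>p. p \<in> P \<Longrightarrow> a \<le> al p eps"
    unfolding a_def alpha_lo_def P_def[symmetric] using Pfin by auto
  have al_pos: "\<And>p. p \<in> P \<Longrightarrow> al p eps > 0"
  proof -
    fix p assume p: "p \<in> P"
    have "al p 0 < al p eps" using alK[OF p] eps unfolding Kinf_def
      using strict_mono_onD[of "{0..}" "al p" 0 eps] by auto
    then show "al p eps > 0" using alK[OF p] unfolding Kinf_def by simp
  qed
  have a_pos: "a > 0"
    unfolding a_def alpha_lo_def P_def[symmetric] using Pfin Pne al_pos by auto
  define c where "c = exp (- kappa * ts)"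
  define C where "C = exp (- kappa * td)"
  have c01: "0 < c" "c \<le> 1" unfolding c_def using kappa_pos ts by auto
  have C_eq: "C = c ^ N" unfolding C_def c_def td_def
    by (simp add: exp_of_nat_mult[symmetric] algebra_simps)
  have C01: "0 < C" "C < 1" unfolding C_def td_def using kappa_pos ts N by auto
  have "kappa * td > ln mu" using dwell kappa_pos by (simp add: field_simps)
  then have "exp (- kappa * td) < exp (- ln mu)" by simp
  also have "exp (- ln mu) = 1 / mu" using mu by (simp add: exp_minus inverse_eq_divide)
  finally have "C < 1 / mu" unfolding C_def .
  define th where "th = (1 / mu - C) / (1 - C)"
  have th0: "0 \<le> th" unfolding th_def using \<open>C < 1 / mu\<close> C01 by simp
  have th1: "th \<le> 1" unfolding th_def using C01 mu by (simp add: field_simps)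
  have thC: "th * (1 - C) = 1 / mu - C" unfolding th_def using C01 by simp
  define r where "r = th * (1 - c) * a"
  have r0: "r \<ge> 0" unfolding r_def using th0 c01 a_pos by simp
  have eta1: "eta \<le> Kinf_inv gamma r" and eta2: "eta \<le> Kinf_inv alpha_up a"
    using eta_bound unfolding r_def th_def C_def a_def c_def by auto
  have gamma_eta: "gamma eta \<le> r"
    using Kinf_inv[OF gammaK r0] Kinf_mono[OF gammaK _ eta1] eta by auto
  have alpha_up_eta: "alpha_up eta \<le> a"
    using Kinf_inv[OF alpha_upK] a_pos Kinf_mono[OF alpha_upK _ eta2] eta by auto
  define b where "b = (\<lambda>i::nat. a * (th + (1 - th) * c ^ i))"
  have b_suc: "\<And>i. c * b i + r = b (Suc i)" unfolding b_def r_def by (simp add: algebra_simps)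
  have b_le_a: "b i \<le> a" for i
  proof -
    have "c ^ i \<le> 1" using c01 by (simp add: power_le_one)
    then have "(1 - th) * c ^ i \<le> (1 - th) * 1" using th1 by (intro mult_left_mono) auto
    then have "th + (1 - th) * c ^ i \<le> 1" by simp
    then have "a * (th + (1 - th) * c ^ i) \<le> a * 1" using a_pos by (intro mult_left_mono) auto
    then show ?thesis unfolding b_def by simp
  qed
  have b0: "b 0 = a" unfolding b_def by simp
  have bN: "b N \<le> b (N - 1)"
  proof -
    have "c ^ N \<le> c ^ (N - 1)" using c01 by (intro power_decreasing) auto
    then show ?thesis unfolding b_def using th1 a_pos
      by (intro mult_left_mono add_left_mono mult_left_mono) auto
  qed
  have mu_bN: "mu * b N = a"
  proof -
    have "th + (1 - th) * C = 1 / mu" using thC by (simp add: algebra_simps)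
    then show ?thesis unfolding b_def C_eq[symmetric] using mu by simp
  qed
  have step: "V p (phi p ts x) q' \<le> b (Suc i)"
    if p: "p \<in> P" and V: "V p x q \<le> b i" and n: "norm (phi p ts q - q') \<le> eta" for p x q q' i
  proof -
    have "V p (phi p ts x) q' \<le> V p (phi p ts x) (phi p ts q) + gam p (norm (q' - phi p ts q))"
      using gamB[OF p, of "phi p ts x" q' "phi p ts q"] by simp
    also have "gam p (norm (q' - phi p ts q)) \<le> gam p eta"
      using Kinf_mono[OF gamK[OF p]] n by (simp add: norm_minus_commute)
    also have "gam p eta \<le> r" using gam_le[OF p] gamma_eta order_trans by blast
    also have "V p (phi p ts x) (phi p ts q) \<le> exp (- kap p * ts) * V p x q"
      using lyap_decay[of "f p" "V p" "al p" "au p" "kap p" "phi p" ts x q] lyap flow p ts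
      unfolding P_def by auto
    also have "exp (- kap p * ts) * V p x q \<le> c * b i"
    proof (rule mult_mono)
      show "exp (- kap p * ts) \<le> c" unfolding c_def using kappa_le[OF p] ts by simp
    qed (use V c01 Vnn[OF p] in auto)
    finally show ?thesis using b_suc by simp
  qed
  have match: "i' < N \<and> p' \<in> P \<and> V p' x' q' \<le> b i'"
    if p: "p \<in> P" and i: "i < N" and ms: "mode_step P N p i p' i'" and V: "V p x' q' \<le> b (Suc i)"
    for p i p' i' x' q'
    using ms unfolding mode_step_def
  proof (elim disjE conjE)
    assume "i < N - 1" "p' = p" "i' = i + 1" then show ?thesis using V p by simp
  next
    assume h: "i = N - 1" "p' = p" "i' = N - 1"
    then have "Suc i = N" using N by simp
    then show ?thesis using h V p bN N by simp
  next
    assume h: "i = N - 1" "p' \<in> P" "p' \<noteq> p" "i' = 0"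
    then have "Suc i = N" using N by simp
    have "V p' x' q' \<le> mu * V p x' q'" using mu_bound h p unfolding P_def by auto
    also have "\<dots> \<le> mu * b N" using V \<open>Suc i = N\<close> mu by (intro mult_left_mono) auto
    finally show ?thesis using h mu_bN b0 N by simp
  qed
  define R where "R = {((x, p, i), (q, p', i')) | x q p i p' i'.
     q \<in> lattice eta \<and> p \<in> P \<and> i < N \<and> p' = p \<and> i' = i \<and> V p x q \<le> b i}"
  have R_iff: "((x, p, i), (q, p', i')) \<in> R \<longleftrightarrow> q \<in> lattice eta \<and> p \<in> P \<and> i < N \<and> p' = p \<and> i' = i \<and> V p x q \<le> b i"
    for x q p i p' i' unfolding R_def by auto
  have rel: "approx_bisim_rel (T_sys m N phi ts) (T_abs m N phi ts eta) eps R"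
    unfolding approx_bisim_rel_def
  proof (intro conjI ballI)
    show "R \<subseteq> states (T_sys m N phi ts) \<times> states (T_abs m N phi ts eta)"
      unfolding R_def T_sys_def T_abs_def P_def by auto
  next
    fix z assume "z \<in> R"
    then obtain x q p i where z: "z = ((x, p, i), (q, p, i))" and q: "q \<in> lattice eta"
      and p: "p \<in> P" and i: "i < N" and V: "V p x q \<le> b i"
      unfolding R_def by auto
    have d: "norm (x - q) \<le> eps"
    proof (rule ccontr)
      assume "\<not> ?thesis"
      then have "al p eps < al p (norm (x - q))"
        using alK[OF p] eps \<open>\<not> norm (x - q) \<le> eps\<close> unfolding Kinf_def
        using strict_mono_onD[of "{0..}" "al p" eps "norm (x - q)"] by auto
      moreover have "al p (norm (x - q)) \<le> al p eps"
        using Vlo[OF p, of x q] V b_le_a[of i] a_le[OF p] by linarith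
      ultimately show False by simp
    qed
    show "case z of (q1, q2) \<Rightarrow>
          dist (outmap (T_sys m N phi ts) q1) (outmap (T_abs m N phi ts eta) q2) \<le> eps \<and>
          (\<forall>l q1'. (q1, l, q1') \<in> trans (T_sys m N phi ts) \<longrightarrow>
                  (\<exists>q2'. (q2, l, q2') \<in> trans (T_abs m N phi ts eta) \<and> (q1', q2') \<in> R)) \<and>
          (\<forall>l q2'. (q2, l, q2') \<in> trans (T_abs m N phi ts eta) \<longrightarrow>
                  (\<exists>q1'. (q1, l, q1') \<in> trans (T_sys m N phi ts) \<and> (q1', q2') \<in> R))"
      unfolding z
    proof (simp only: prod.case, intro conjI allI impI)
      show "dist (outmap (T_sys m N phi ts) (x, p, i)) (outmap (T_abs m N phi ts eta) (q, p, i)) \<le> eps"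
        using d by (simp add: T_sys_def T_abs_def dist_norm)
    next
      fix l q1' assume tr: "((x, p, i), l, q1') \<in> trans (T_sys m N phi ts)"
      obtain x' p' i' where q1': "q1' = (x', p', i')" by (cases q1') auto
      from tr have l: "l = p" and x': "x' = phi p ts x" and ms: "mode_step P N p i p' i'"
        unfolding q1' T_sys_trans P_def by auto
      obtain q' where q': "q' \<in> lattice eta" "norm (phi p ts q - q') \<le> eta"
        using lattice_cover[OF eta, of "phi p ts q"] by (auto simp: norm_minus_commute)
      have "i' < N \<and> p' \<in> P \<and> V p' x' q' \<le> b i'"
        using match[OF p i ms] step[OF p V q'(2)] x' by simp
      then show "\<exists>q2'. ((q, p, i), l, q2') \<in> trans (T_abs m N phi ts eta) \<and> (q1', q2') \<in> R"
        using q q' p i ms l unfolding q1' by (intro exI[of _ "(q', p', i')"]) (auto simp: T_abs_trans R_iff P_def)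
    next
      fix l q2' assume tr: "((q, p, i), l, q2') \<in> trans (T_abs m N phi ts eta)"
      obtain q' p' i' where q2': "q2' = (q', p', i')" by (cases q2') auto
      from tr have l: "l = p" and q': "q' \<in> lattice eta" "norm (phi p ts q - q') \<le> eta"
        and ms: "mode_step P N p i p' i'"
        unfolding q2' T_abs_trans P_def by auto
      have "i' < N \<and> p' \<in> P \<and> V p' (phi p ts x) q' \<le> b i'"
        using match[OF p i ms] step[OF p V q'(2)] by simp
      then show "\<exists>q1'. ((x, p, i), l, q1') \<in> trans (T_sys m N phi ts) \<and> (q1', q2') \<in> R"
        using q q' p i ms l unfolding q2' by (intro exI[of _ "(phi p ts x, p', i')"]) (auto simp: T_sys_trans R_iff P_def)
    qed
  qed
  show ?thesis unfolding approx_bisimilar_def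
  proof (intro exI conjI ballI)
    show "approx_bisim_rel (T_sys m N phi ts) (T_abs m N phi ts eta) eps R" by (rule rel)
  next
    fix z assume "z \<in> inits (T_sys m N phi ts)"
    then obtain x p where z: "z = (x, p, 0)" and p: "p \<in> P" unfolding T_sys_def P_def by auto
    obtain q where q: "q \<in> lattice eta" "norm (x - q) \<le> eta" using lattice_cover[OF eta] by blast
    have "V p x q \<le> au p (norm (x - q))" by (rule Vup[OF p])
    also have "\<dots> \<le> au p eta" using Kinf_mono[OF auK[OF p]] q by simp
    also have "\<dots> \<le> a" using au_le[OF p] alpha_up_eta order_trans by blast
    finally have "V p x q \<le> b 0" using b0 by simp
    then show "\<exists>q2\<in>inits (T_abs m N phi ts eta). (z, q2) \<in> R"
      using q p N unfolding z by (intro bexI[of _ "(q, p, 0)"]) (auto simp: R_iff T_abs_def P_def)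
  next
    fix z assume "z \<in> inits (T_abs m N phi ts eta)"
    then obtain q p where z: "z = (q, p, 0)" and p: "p \<in> P" and q: "q \<in> lattice eta"
      unfolding T_abs_def P_def by auto
    have "V p q q \<le> au p 0" using Vup[OF p, of q q] by simp
    also have "\<dots> = 0" using auK[OF p] unfolding Kinf_def by simp
    finally have "V p q q \<le> b 0" using b0 a_pos by simp
    then show "\<exists>q1\<in>inits (T_sys m N phi ts). (q1, z) \<in> R"
      using q p N unfolding z by (intro bexI[of _ "(q, p, 0)"]) (auto simp: R_iff T_sys_def P_def)
  qed
qed

end
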